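(* There is a function $\Gamma:\mathbb R\to\mathbb R$ such that for every $t\in\mathbb R$, $$\lim_{n\to\infty}\frac1n\log\mathbb{E}\big(e^{tH_n}\big)=\Gamma(t).$$
   Context: Standing setup (discrete-time Hawkes process, DTHP). Let $(a_i)_{i=0}^\infty$ be a sequence of strictly positive real numbers with $\sum_{i=0}^\infty a_i<1$ and $\sum_{i=1}^\infty i\,a_i<\infty$. The arrival process $\{\xi_n\}_{n\ge1}$ is a sequence of $\{0,1\}$-valued random variables on a probability space $(\Omega,\mathcal F,\mathbb P)$ with $\mathbb{P}(\xi_1=1)=a_0$, $\mathbb P(\xi_1=0)=1-a_0$, and for $n\ge2$, $$\mathbb{P}(\xi_n=1\mid \xi_1,\dots,\xi_{n-1})=a_0+\sum_{i=1}^{n-1}a_{n-i}\xi_i,\qquad \mathbb{P}(\xi_n=0\mid \xi_1,\dots,\xi_{n-1})=1-\Big(a_0+\sum_{i=1}^{n-1}a_{n-i}\xi_i\Big).$$ The DTHP is $H_n=\sum_{i=1}^n\xi_i$, and $\mathcal F_n=\sigma(\xi_1,\dots,\xi_n)$. *)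

theory Defs
  imports "HOL-Probability.Probability"
begin

text \<open>The arrival indicators are xi 1, xi 2, ...
  (index 0 is unused).  The conditional law
  P(xi n = 1 | xi 1, ..., xi (n-1)) = a 0 + sum_{i=1}^{n-1} a (n-i) * xi i
  is expressed in the elementary form for discrete random variables:
  for every 0/1 history x, the joint probability of the history together with
  xi n = 1 equals the given conditional probability times the probability of
  the history.  For n = 1 this gives P(xi 1 = 1) = a 0.\<close>

definition DTHP :: "'s measure \<Rightarrow> (nat \<Rightarrow> real) \<Rightarrow> (nat \<Rightarrow> 's \<Rightarrow> real) \<Rightarrow> bool" where
  "DTHP M a \<xi> \<longleftrightarrow>
     prob_space M \<and>
     (\<forall>n\<ge>1. \<xi> n \<in> borel_measurable M) \<and>
     (\<forall>n\<ge>1. \<forall>\<omega>\<in>space M. \<xi> n \<omega> \<in> {0, 1}) \<and>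
     (\<forall>n\<ge>1. \<forall>x::nat \<Rightarrow> real. (\<forall>i\<in>{1..n-1}. x i \<in> {0, 1}) \<longrightarrow>
        measure M {\<omega>\<in>space M. (\<forall>i\<in>{1..n-1}. \<xi> i \<omega> = x i) \<and> \<xi> n \<omega> = 1}
        = (a 0 + (\<Sum>i=1..n-1. a (n - i) * x i)) *
          measure M {\<omega>\<in>space M. \<forall>i\<in>{1..n-1}. \<xi> i \<omega> = x i})"

definition DTHP_H :: "(nat \<Rightarrow> 's \<Rightarrow> real) \<Rightarrow> nat \<Rightarrow> 's \<Rightarrow> real" where
  "DTHP_H \<xi> n \<omega> = (\<Sum>i=1..n. \<xi> i \<omega>)"

end

theory Submission
  imports Defs
begin


fun W :: "(nat \<Rightarrow> real) \<Rightarrow> real \<Rightarrow> (nat \<Rightarrow> real) \<Rightarrow> nat \<Rightarrow> real" where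
  "W a t c 0 = 1"
| "W a t c (Suc m) = (1 - c 0) * W a t (\<lambda>k. c (Suc k)) m
      + c 0 * exp t * W a t (\<lambda>k. c (Suc k) + a (Suc k)) m"

definition valid :: "(nat \<Rightarrow> real) \<Rightarrow> (nat \<Rightarrow> real) \<Rightarrow> bool" where
  "valid a c \<longleftrightarrow> (\<forall>k. 0 \<le> c k \<and> c k + (\<Sum>j=1..k. a j) < 1)"

lemma valid_shift:
  assumes "\<forall>i. a i \<ge> 0" "valid a c" shows "valid a (\<lambda>k. c (Suc k))"
  unfolding valid_def
proof
  fix k
  have "c (Suc k) + (\<Sum>j=1..Suc k. a j) < 1" using assms(2) valid_def by blast
  moreover have "(\<Sum>j=1..Suc k. a j) = (\<Sum>j=1..k. a j) + a (Suc k)" by simp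
  ultimately show "0 \<le> c (Suc k) \<and> c (Suc k) + (\<Sum>j=1..k. a j) < 1"
    using assms valid_def by (smt (verit))
qed

lemma valid_ev:
  assumes "\<forall>i. a i \<ge> 0" "valid a c" shows "valid a (\<lambda>k. c (Suc k) + a (Suc k))"
  unfolding valid_def
proof
  fix k
  have "c (Suc k) + (\<Sum>j=1..Suc k. a j) < 1" "0 \<le> c (Suc k)" using assms(2) valid_def by blast+
  moreover have "(\<Sum>j=1..Suc k. a j) = (\<Sum>j=1..k. a j) + a (Suc k)" by simp
  ultimately show "0 \<le> c (Suc k) + a (Suc k) \<and> c (Suc k) + a (Suc k) + (\<Sum>j=1..k. a j) < 1"
    using assms(1) by (smt (verit))
qed

lemma valid0: assumes "valid a c" shows "0 \<le> c 0" "c 0 < 1"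
proof -
  have "0 \<le> c 0 \<and> c 0 + (\<Sum>j=1..0. a j) < 1" using assms unfolding valid_def by blast
  then show "0 \<le> c 0" "c 0 < 1" by simp_all
qed

lemma W_bounds:
  assumes "\<forall>i. a i \<ge> 0" "valid a c"
  shows "exp (- \<bar>t\<bar> * m) \<le> W a t c m \<and> W a t c m \<le> exp (\<bar>t\<bar> * m)"
  using assms(2)
proof (induction m arbitrary: c)
  case 0 then show ?case by simp
next
  case (Suc m)
  let ?A = "W a t (\<lambda>k. c (Suc k)) m" and ?B = "W a t (\<lambda>k. c (Suc k) + a (Suc k)) m"
  have A: "exp (- \<bar>t\<bar> * m) \<le> ?A \<and> ?A \<le> exp (\<bar>t\<bar> * m)"
    using Suc.IH valid_shift[OF assms(1) Suc.prems] by blast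
  have B: "exp (- \<bar>t\<bar> * m) \<le> ?B \<and> ?B \<le> exp (\<bar>t\<bar> * m)"
    using Suc.IH valid_ev[OF assms(1) Suc.prems] by blast
  have c0: "0 \<le> c 0" "c 0 \<le> 1" using valid0[OF Suc.prems] by auto
  have B0: "0 \<le> ?B" using B by (meson exp_ge_zero order_trans)
  have e1: "exp (- \<bar>t\<bar>) \<le> exp t" "exp t \<le> exp \<bar>t\<bar>" "exp (- \<bar>t\<bar>) \<le> 1" "1 \<le> exp \<bar>t\<bar>" by auto
  have eS: "exp (- \<bar>t\<bar> * Suc m) = exp (- \<bar>t\<bar>) * exp (- \<bar>t\<bar> * m)"
       "exp (\<bar>t\<bar> * Suc m) = exp \<bar>t\<bar> * exp (\<bar>t\<bar> * m)"
    by (simp_all add: exp_add[symmetric] algebra_simps)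
  have lo: "exp (- \<bar>t\<bar>) * exp (- \<bar>t\<bar> * m) \<le> (1 - c 0) * ?A + c 0 * exp t * ?B"
  proof -
    have "exp (- \<bar>t\<bar>) * exp (- \<bar>t\<bar> * m) = (1 - c 0) * (exp (- \<bar>t\<bar>) * exp (- \<bar>t\<bar> * m)) + c 0 * (exp (- \<bar>t\<bar>) * exp (- \<bar>t\<bar> * m))"
      by (simp add: algebra_simps)
    also have "\<dots> \<le> (1 - c 0) * ?A + c 0 * (exp t * ?B)"
    proof (intro add_mono mult_left_mono)
      show "exp (- \<bar>t\<bar>) * exp (- \<bar>t\<bar> * m) \<le> ?A"
        using A e1 by (meson order_trans mult_left_le_one_le exp_ge_zero)
      show "exp (- \<bar>t\<bar>) * exp (- \<bar>t\<bar> * m) \<le> exp t * ?B"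
        using B B0 e1 by (intro mult_mono) auto
    qed (use c0 in auto)
    finally show ?thesis by (simp add: mult.assoc)
  qed
  have hi: "(1 - c 0) * ?A + c 0 * exp t * ?B \<le> exp \<bar>t\<bar> * exp (\<bar>t\<bar> * m)"
  proof -
    have "(1 - c 0) * ?A + c 0 * (exp t * ?B) \<le> (1 - c 0) * (exp \<bar>t\<bar> * exp (\<bar>t\<bar> * m)) + c 0 * (exp \<bar>t\<bar> * exp (\<bar>t\<bar> * m))"
    proof (intro add_mono mult_left_mono)
      show "?A \<le> exp \<bar>t\<bar> * exp (\<bar>t\<bar> * m)"
        proof -
        have "exp (\<bar>t\<bar> * m) \<le> exp \<bar>t\<bar> * exp (\<bar>t\<bar> * m)"
          using e1(4) by (simp add: exp_add[symmetric])
        then show ?thesis using A by linarith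
      qed
      show "exp t * ?B \<le> exp \<bar>t\<bar> * exp (\<bar>t\<bar> * m)"
        using B B0 e1 by (intro mult_mono) auto
    qed (use c0 in auto)
    also have "\<dots> = exp \<bar>t\<bar> * exp (\<bar>t\<bar> * m)" by (simp add: algebra_simps)
    finally show ?thesis by (simp add: mult.assoc)
  qed
  show ?case using lo hi eS by simp
qed

lemma W_nonneg: assumes "\<forall>i. a i \<ge> 0" "valid a c" shows "0 \<le> W a t c m"
  using W_bounds[OF assms, of t m] by (meson exp_ge_zero order_trans)

lemma W_mono_pos:
  assumes a: "\<forall>i. a i \<ge> 0" and t: "0 \<le> t"
  shows "valid a d \<Longrightarrow> \<forall>k. 0 \<le> c k \<and> c k \<le> d k \<Longrightarrow> W a t c m \<le> W a t d m"
proof (induction m arbitrary: c d)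
  case 0 then show ?case by simp
next
  case (Suc m)
  let ?Ac = "W a t (\<lambda>k. c (Suc k)) m" and ?Bc = "W a t (\<lambda>k. c (Suc k) + a (Suc k)) m"
  let ?Ad = "W a t (\<lambda>k. d (Suc k)) m" and ?Bd = "W a t (\<lambda>k. d (Suc k) + a (Suc k)) m"
  have vs: "valid a (\<lambda>k. d (Suc k))" and ve: "valid a (\<lambda>k. d (Suc k) + a (Suc k))"
    using valid_shift[OF a Suc.prems(1)] valid_ev[OF a Suc.prems(1)] by auto
  have dnn: "\<forall>k. 0 \<le> d k" using Suc.prems(1) unfolding valid_def by blast
  have A: "?Ac \<le> ?Ad" using Suc.IH[OF vs] Suc.prems(2) by auto
  have B: "?Bc \<le> ?Bd" using Suc.IH[OF ve] Suc.prems(2) a by (simp add: add_right_mono)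
  have AB: "?Ad \<le> ?Bd" using Suc.IH[OF ve] dnn a by (simp add: add_increasing2)
  have Bd0: "0 \<le> ?Bd" by (rule W_nonneg[OF a ve])
  have c0: "0 \<le> c 0" "c 0 \<le> d 0" "d 0 < 1" using Suc.prems valid0 by auto
  have et: "1 \<le> exp t" using t by simp
  have "W a t c (Suc m) = (1 - c 0) * ?Ac + c 0 * exp t * ?Bc" by simp
  also have "\<dots> \<le> (1 - c 0) * ?Ad + c 0 * exp t * ?Bd"
    using A B c0 by (intro add_mono mult_left_mono) auto
  also have "\<dots> \<le> (1 - d 0) * ?Ad + d 0 * exp t * ?Bd"
  proof -
    have "?Bd \<le> exp t * ?Bd" using mult_right_mono[OF et Bd0] by simp
    then have "?Ad \<le> exp t * ?Bd" using AB by linarith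
    then have "0 \<le> (d 0 - c 0) * (exp t * ?Bd - ?Ad)" using c0 by simp
    then show ?thesis by (simp add: algebra_simps)
  qed
  also have "\<dots> = W a t d (Suc m)" by simp
  finally show ?case .
qed

lemma W_mono_neg:
  assumes a: "\<forall>i. a i \<ge> 0" and t: "t \<le> 0"
  shows "valid a d \<Longrightarrow> \<forall>k. 0 \<le> c k \<and> c k \<le> d k \<Longrightarrow> W a t d m \<le> W a t c m"
proof (induction m arbitrary: c d)
  case 0 then show ?case by simp
next
  case (Suc m)
  let ?Ac = "W a t (\<lambda>k. c (Suc k)) m" and ?Bc = "W a t (\<lambda>k. c (Suc k) + a (Suc k)) m"
  let ?Ad = "W a t (\<lambda>k. d (Suc k)) m" and ?Bd = "W a t (\<lambda>k. d (Suc k) + a (Suc k)) m"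
  have vs: "valid a (\<lambda>k. d (Suc k))" and ve: "valid a (\<lambda>k. d (Suc k) + a (Suc k))"
    using valid_shift[OF a Suc.prems(1)] valid_ev[OF a Suc.prems(1)] by auto
  have dnn: "\<forall>k. 0 \<le> d k" using Suc.prems(1) unfolding valid_def by blast
  have A: "?Ad \<le> ?Ac" using Suc.IH[OF vs] Suc.prems(2) by auto
  have B: "?Bd \<le> ?Bc" using Suc.IH[OF ve] Suc.prems(2) a by (simp add: add_right_mono)
  have AB: "?Bd \<le> ?Ad" using Suc.IH[OF ve] dnn a by (simp add: add_increasing2)
  have Bd0: "0 \<le> ?Bd" by (rule W_nonneg[OF a ve])
  have c0: "0 \<le> c 0" "c 0 \<le> d 0" "d 0 < 1" using Suc.prems valid0 by auto
  have et: "exp t \<le> 1" "0 < exp t" using t by simp_all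
  have "W a t d (Suc m) = (1 - d 0) * ?Ad + d 0 * exp t * ?Bd" by simp
  also have "\<dots> \<le> (1 - c 0) * ?Ad + c 0 * exp t * ?Bd"
  proof -
    have "exp t * ?Bd \<le> ?Bd" using mult_right_mono[OF et(1) Bd0] by simp
    then have "exp t * ?Bd \<le> ?Ad" using AB by linarith
    then have "0 \<le> (d 0 - c 0) * (?Ad - exp t * ?Bd)" using c0 by simp
    then show ?thesis by (simp add: algebra_simps)
  qed
  also have "\<dots> \<le> (1 - c 0) * ?Ac + c 0 * exp t * ?Bc"
    using A B c0 et by (intro add_mono mult_left_mono) auto
  also have "\<dots> = W a t c (Suc m)" by simp
  finally show ?case .
qed

lemma W_super:
  assumes a: "\<forall>i. a i \<ge> 0" and t: "0 \<le> t" and v0: "valid a (\<lambda>_. a 0)"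
  shows "valid a c \<Longrightarrow> \<forall>k. a 0 \<le> c k \<Longrightarrow> W a t c n * W a t (\<lambda>_. a 0) m \<le> W a t c (n + m)"
proof (induction n arbitrary: c)
  case 0 then show ?case using W_mono_pos[OF a t, of c "\<lambda>_. a 0" m] a by auto
next
  case (Suc n)
  have vs: "valid a (\<lambda>k. c (Suc k))" and ve: "valid a (\<lambda>k. c (Suc k) + a (Suc k))"
    using valid_shift[OF a Suc.prems(1)] valid_ev[OF a Suc.prems(1)] by auto
  have A: "W a t (\<lambda>k. c (Suc k)) n * W a t (\<lambda>_. a 0) m \<le> W a t (\<lambda>k. c (Suc k)) (n + m)"
    using Suc.IH[OF vs] Suc.prems(2) by auto
  have B: "W a t (\<lambda>k. c (Suc k) + a (Suc k)) n * W a t (\<lambda>_. a 0) m \<le> W a t (\<lambda>k. c (Suc k) + a (Suc k)) (n + m)"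
    using Suc.IH[OF ve] Suc.prems(2) a by (simp add: add_increasing2)
  have c0: "0 \<le> c 0" "c 0 < 1" using Suc.prems valid0 by auto
  have "W a t c (Suc n) * W a t (\<lambda>_. a 0) m
     = (1 - c 0) * (W a t (\<lambda>k. c (Suc k)) n * W a t (\<lambda>_. a 0) m)
       + c 0 * exp t * (W a t (\<lambda>k. c (Suc k) + a (Suc k)) n * W a t (\<lambda>_. a 0) m)"
    by (simp add: algebra_simps)
  also have "\<dots> \<le> W a t c (Suc n + m)"
    using A B c0 by (simp, intro add_mono mult_left_mono) auto
  finally show ?case .
qed

lemma W_sub:
  assumes a: "\<forall>i. a i \<ge> 0" and t: "t \<le> 0" and v0: "valid a (\<lambda>_. a 0)"
  shows "valid a c \<Longrightarrow> \<forall>k. a 0 \<le> c k \<Longrightarrow> W a t c (n + m) \<le> W a t c n * W a t (\<lambda>_. a 0) m"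
proof (induction n arbitrary: c)
  case 0 then show ?case using W_mono_neg[OF a t, of c "\<lambda>_. a 0" m] a by auto
next
  case (Suc n)
  have vs: "valid a (\<lambda>k. c (Suc k))" and ve: "valid a (\<lambda>k. c (Suc k) + a (Suc k))"
    using valid_shift[OF a Suc.prems(1)] valid_ev[OF a Suc.prems(1)] by auto
  have A: "W a t (\<lambda>k. c (Suc k)) (n + m) \<le> W a t (\<lambda>k. c (Suc k)) n * W a t (\<lambda>_. a 0) m"
    using Suc.IH[OF vs] Suc.prems(2) by auto
  have B: "W a t (\<lambda>k. c (Suc k) + a (Suc k)) (n + m) \<le> W a t (\<lambda>k. c (Suc k) + a (Suc k)) n * W a t (\<lambda>_. a 0) m"
    using Suc.IH[OF ve] Suc.prems(2) a by (simp add: add_increasing2)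
  have c0: "0 \<le> c 0" "c 0 < 1" using Suc.prems valid0 by auto
  have "W a t c (Suc n + m) \<le> (1 - c 0) * (W a t (\<lambda>k. c (Suc k)) n * W a t (\<lambda>_. a 0) m)
       + c 0 * exp t * (W a t (\<lambda>k. c (Suc k) + a (Suc k)) n * W a t (\<lambda>_. a 0) m)"
    using A B c0 by (simp, intro add_mono mult_left_mono) auto
  also have "\<dots> = W a t c (Suc n) * W a t (\<lambda>_. a 0) m"
    by (simp add: algebra_simps)
  finally show ?case .
qed



lemma super_mult:
  fixes f :: "nat \<Rightarrow> real"
  assumes sup: "\<And>m n. f m + f n \<le> f (m + n)"
  shows "real q * f k + f r \<le> f (q * k + r)"
proof (induction q)
  case 0 then show ?case by simp
next
  case (Suc q)
  have "f k + f (q * k + r) \<le> f (k + (q * k + r))" by (rule sup)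
  then show ?case using Suc by (simp add: algebra_simps)
qed

lemma fekete:
  fixes f :: "nat \<Rightarrow> real"
  assumes sup: "\<And>m n. f m + f n \<le> f (m + n)" and bd: "\<And>n. f n \<le> C * real n"
  shows "convergent (\<lambda>n. f n / real n)"
proof -
  define S where "S = (\<lambda>n. f n / real n) ` {1..}"
  define L where "L = Sup S"
  have bdd: "bdd_above S" unfolding S_def bdd_above_def
    using bd by (intro exI[of _ C]) (auto simp: divide_le_eq mult.commute)
  have ne: "S \<noteq> {}" unfolding S_def by auto
  have upper: "f n / real n \<le> L" if "n \<ge> 1" for n
    unfolding L_def using that bdd by (intro cSup_upper) (auto simp: S_def)
  have "(\<lambda>n. f n / real n) \<longlonglongrightarrow> L"
  proof (rule LIMSEQ_I)
    fix e :: real assume e: "0 < e"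
    have "L - e/2 < Sup S" using e L_def by simp
    then obtain s where "s \<in> S" "L - e/2 < s" using less_cSup_iff[OF ne bdd] by blast
    then obtain k where k: "k \<ge> 1" "L - e/2 < f k / real k" unfolding S_def by auto
    define B where "B = (\<Sum>r<k. \<bar>f r\<bar>)"
    have Br: "- B \<le> f r" if "r < k" for r
    proof -
      have "\<bar>f r\<bar> \<le> B" unfolding B_def using that
        by (intro member_le_sum) auto
      then show ?thesis by linarith
    qed
    obtain N :: nat where N: "real N > 2 * (\<bar>f k\<bar> + B) / e" using reals_Archimedean2 by blast
    show "\<exists>N. \<forall>n\<ge>N. norm (f n / real n - L) < e"
    proof (intro exI[of _ "max N 1"] allI impI)
      fix n assume n: "max N 1 \<le> n"
      then have n1: "n \<ge> 1" and nN: "n \<ge> N" by auto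
      define q where "q = n div k"
      define r where "r = n mod k"
      have nqr: "n = q * k + r" unfolding q_def r_def by simp
      have rk: "r < k" unfolding r_def using k by simp
      have low: "real q * f k + f r \<le> f n" using super_mult[OF sup, of q k r] nqr by simp
      have rn: "real n = real q * real k + real r" using nqr by (metis of_nat_add of_nat_mult)
      have kpos: "real k > 0" using k by simp
      have npos: "real n > 0" using n1 by simp
      have qf: "real q * f k = f k / real k * real n - real r * (f k / real k)"
        using rn kpos by (simp add: field_simps)
      have rbound: "real r * (f k / real k) \<le> \<bar>f k\<bar>"
      proof -
        have "real r * (f k / real k) \<le> real r * (\<bar>f k\<bar> / real k)"
          by (intro mult_left_mono) (auto intro: divide_right_mono)
        also have "\<dots> \<le> real k * (\<bar>f k\<bar> / real k)"
          using rk by (intro mult_right_mono) auto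
        also have "\<dots> = \<bar>f k\<bar>" using kpos by simp
        finally show ?thesis .
      qed
      have "f k / real k * real n - \<bar>f k\<bar> - B \<le> f n"
        using low qf rbound Br[OF rk] by linarith
      then have "(f k / real k * real n - \<bar>f k\<bar> - B) / real n \<le> f n / real n"
        using npos by (intro divide_right_mono) auto
      moreover have "(f k / real k * real n - \<bar>f k\<bar> - B) / real n = f k / real k - (\<bar>f k\<bar> + B) / real n"
        using npos by (simp add: field_simps)
      ultimately have "f k / real k - (\<bar>f k\<bar> + B) / real n \<le> f n / real n" by simp
      moreover have "(\<bar>f k\<bar> + B) / real n < e / 2"
      proof -
        have "real n \<ge> real N" using nN by simp
        then have "real n > 2 * (\<bar>f k\<bar> + B) / e" using N by linarith
        then show ?thesis using e npos by (simp add: field_simps)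
      qed
      ultimately have "L - e < f n / real n" using k by linarith
      moreover have "f n / real n \<le> L" using upper[OF n1] .
      ultimately show "norm (f n / real n - L) < e" using e by simp
    qed
  qed
  then show ?thesis by (rule convergentI)
qed



definition AS :: "'s measure \<Rightarrow> (nat \<Rightarrow> 's \<Rightarrow> real) \<Rightarrow> nat \<Rightarrow> (nat \<Rightarrow> real) \<Rightarrow> 's set" where
  "AS M \<xi> n x = {\<omega>\<in>space M. \<forall>i\<in>{1..n}. \<xi> i \<omega> = x i}"

lemma AS_Suc:
  "AS M \<xi> (Suc n) (x(Suc n := v)) = {\<omega>\<in>AS M \<xi> n x. \<xi> (Suc n) \<omega> = v}"
  unfolding AS_def by (auto simp: atLeastAtMostSuc_conv)

lemma AS_sets:
  assumes "DTHP M a \<xi>" shows "AS M \<xi> n x \<in> sets M"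
proof -
  have m: "\<xi> i \<in> borel_measurable M" if "i \<ge> 1" for i using assms that unfolding DTHP_def by blast
  show ?thesis unfolding AS_def
  proof (intro sets.sets_Collect_finite_All)
    fix i assume "i \<in> {1..n}"
    then have "\<xi> i \<in> borel_measurable M" using m by auto
    then show "{\<omega>\<in>space M. \<xi> i \<omega> = x i} \<in> sets M" by measurable
  qed auto
qed

lemma key:
  fixes t :: real
  assumes D: "DTHP M a \<xi>"
  shows "(\<forall>i\<in>{1..n}. x i \<in> {0, 1}) \<Longrightarrow>
    (\<integral>\<omega>. indicator (AS M \<xi> n x) \<omega> * exp (t * (\<Sum>i<m. \<xi> (Suc n + i) \<omega>)) \<partial>M)
     = measure M (AS M \<xi> n x) * W a t (\<lambda>k. a 0 + (\<Sum>i=1..n. a (Suc n + k - i) * x i)) m"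
proof (induction m arbitrary: n x)
  case 0
  then show ?case using AS_sets[OF D] by simp
next
  case (Suc m)
  interpret prob_space M using D unfolding DTHP_def by blast
  have meas: "\<xi> i \<in> borel_measurable M" if "i \<ge> 1" for i using D that unfolding DTHP_def by blast
  have vals: "\<xi> i \<omega> \<in> {0,1}" if "i \<ge> 1" "\<omega> \<in> space M" for i \<omega> using D that unfolding DTHP_def by blast
  define x0 where "x0 = x(Suc n := 0)"
  define x1 where "x1 = x(Suc n := 1)"
  define c where "c = (\<lambda>k. a 0 + (\<Sum>i=1..n. a (Suc n + k - i) * x i))"
  define F where "F = (\<lambda>\<omega>. exp (t * (\<Sum>i<m. \<xi> (Suc (Suc n) + i) \<omega>)))"
  have mi[measurable]: "\<xi> (Suc (Suc n) + i) \<in> borel_measurable M" for i using meas by auto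
  have F_meas: "F \<in> borel_measurable M" unfolding F_def by measurable
  have F_bd: "\<bar>F \<omega>\<bar> \<le> exp (\<bar>t\<bar> * m)" if "\<omega> \<in> space M" for \<omega>
  proof -
    have vi: "0 \<le> \<xi> j \<omega> \<and> \<xi> j \<omega> \<le> 1" if "j \<ge> 1" for j
      using vals[OF that \<open>\<omega> \<in> space M\<close>] by auto
    have "(\<Sum>i<m. \<xi> (Suc (Suc n) + i) \<omega>) \<le> (\<Sum>i<m. 1)"
      by (rule sum_mono) (use vi in auto)
    moreover have "0 \<le> (\<Sum>i<m. \<xi> (Suc (Suc n) + i) \<omega>)"
      by (rule sum_nonneg) (use vi in auto)
    ultimately have "(\<Sum>i<m. \<xi> (Suc (Suc n) + i) \<omega>) \<le> m" "0 \<le> (\<Sum>i<m. \<xi> (Suc (Suc n) + i) \<omega>)" by auto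
    then have "\<bar>t * (\<Sum>i<m. \<xi> (Suc (Suc n) + i) \<omega>)\<bar> \<le> \<bar>t\<bar> * m"
      by (auto simp: abs_mult intro!: mult_left_mono)
    then show ?thesis unfolding F_def by simp
  qed
  have int: "integrable M (\<lambda>\<omega>. indicator (AS M \<xi> (Suc n) y) \<omega> * F \<omega>)" for y
  proof (rule integrable_const_bound[where B="exp (\<bar>t\<bar> * m)"])
    show "AE \<omega> in M. norm (indicator (AS M \<xi> (Suc n) y) \<omega> * F \<omega>) \<le> exp (\<bar>t\<bar> * m)"
      using F_bd by (intro AE_I2) (auto simp: indicator_def)
    show "(\<lambda>\<omega>. indicator (AS M \<xi> (Suc n) y) \<omega> * F \<omega>) \<in> borel_measurable M"
      using AS_sets[OF D] F_meas by measurable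
  qed
  have split: "indicator (AS M \<xi> n x) \<omega> * exp (t * (\<Sum>i<Suc m. \<xi> (Suc n + i) \<omega>))
     = indicator (AS M \<xi> (Suc n) x0) \<omega> * F \<omega> + exp t * (indicator (AS M \<xi> (Suc n) x1) \<omega> * F \<omega>)"
    if "\<omega> \<in> space M" for \<omega>
  proof -
    have s: "(\<Sum>i<Suc m. \<xi> (Suc n + i) \<omega>) = \<xi> (Suc n) \<omega> + (\<Sum>i<m. \<xi> (Suc (Suc n) + i) \<omega>)"
      unfolding sum.lessThan_Suc_shift by simp
    have "\<xi> (Suc n) \<omega> \<in> {0,1}" using vals that by auto
    then show ?thesis unfolding x0_def x1_def AS_Suc s F_def
      by (auto simp: indicator_def exp_add distrib_left)
  qed
  have I: "(\<integral>\<omega>. indicator (AS M \<xi> n x) \<omega> * exp (t * (\<Sum>i<Suc m. \<xi> (Suc n + i) \<omega>)) \<partial>M)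
     = (\<integral>\<omega>. indicator (AS M \<xi> (Suc n) x0) \<omega> * F \<omega> \<partial>M) + exp t * (\<integral>\<omega>. indicator (AS M \<xi> (Suc n) x1) \<omega> * F \<omega> \<partial>M)"
    by (subst Bochner_Integration.integral_cong[OF refl split]) (auto simp: int)
  have x0v: "\<forall>i\<in>{1..Suc n}. x0 i \<in> {0,1}" and x1v: "\<forall>i\<in>{1..Suc n}. x1 i \<in> {0,1}"
    using Suc.prems unfolding x0_def x1_def by auto
  have c0: "(\<lambda>k. a 0 + (\<Sum>i=1..Suc n. a (Suc (Suc n) + k - i) * x0 i)) = (\<lambda>k. c (Suc k))"
    unfolding c_def x0_def by (auto intro!: sum.cong)
  have c1: "(\<lambda>k. a 0 + (\<Sum>i=1..Suc n. a (Suc (Suc n) + k - i) * x1 i)) = (\<lambda>k. c (Suc k) + a (Suc k))"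
    unfolding c_def x1_def by (auto intro!: sum.cong)
  have P1: "measure M (AS M \<xi> (Suc n) x1) = c 0 * measure M (AS M \<xi> n x)"
  proof -
    have "measure M {\<omega>\<in>space M. (\<forall>i\<in>{1..Suc n - 1}. \<xi> i \<omega> = x i) \<and> \<xi> (Suc n) \<omega> = 1}
      = (a 0 + (\<Sum>i=1..Suc n - 1. a (Suc n - i) * x i)) *
          measure M {\<omega>\<in>space M. \<forall>i\<in>{1..Suc n - 1}. \<xi> i \<omega> = x i}"
    proof -
      have H4: "\<forall>n\<ge>1. \<forall>x::nat \<Rightarrow> real. (\<forall>i\<in>{1..n-1}. x i \<in> {0, 1}) \<longrightarrow>
        measure M {\<omega>\<in>space M. (\<forall>i\<in>{1..n-1}. \<xi> i \<omega> = x i) \<and> \<xi> n \<omega> = 1}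
        = (a 0 + (\<Sum>i=1..n-1. a (n - i) * x i)) *
          measure M {\<omega>\<in>space M. \<forall>i\<in>{1..n-1}. \<xi> i \<omega> = x i}"
        using D unfolding DTHP_def by blast
      show ?thesis by (rule H4[rule_format, of "Suc n" x]) (use Suc.prems in auto)
    qed
    moreover have "AS M \<xi> (Suc n) x1 = {\<omega>\<in>space M. (\<forall>i\<in>{1..Suc n - 1}. \<xi> i \<omega> = x i) \<and> \<xi> (Suc n) \<omega> = 1}"
      unfolding x1_def AS_Suc AS_def by auto
    moreover have "AS M \<xi> n x = {\<omega>\<in>space M. \<forall>i\<in>{1..Suc n - 1}. \<xi> i \<omega> = x i}"
      unfolding AS_def by simp
    moreover have "c 0 = a 0 + (\<Sum>i=1..Suc n - 1. a (Suc n - i) * x i)" unfolding c_def by simp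
    ultimately show ?thesis by simp
  qed
  have P0: "measure M (AS M \<xi> (Suc n) x0) = (1 - c 0) * measure M (AS M \<xi> n x)"
  proof -
    have "AS M \<xi> (Suc n) x0 = AS M \<xi> n x - AS M \<xi> (Suc n) x1"
      unfolding x0_def x1_def AS_Suc using vals by (auto simp: AS_def)
    moreover have "AS M \<xi> (Suc n) x1 \<subseteq> AS M \<xi> n x" unfolding x1_def AS_Suc by auto
    ultimately have "measure M (AS M \<xi> (Suc n) x0) = measure M (AS M \<xi> n x) - measure M (AS M \<xi> (Suc n) x1)"
      using AS_sets[OF D] by (simp add: finite_measure_Diff)
    then show ?thesis using P1 by (simp add: algebra_simps)
  qed
  have "(\<integral>\<omega>. indicator (AS M \<xi> n x) \<omega> * exp (t * (\<Sum>i<Suc m. \<xi> (Suc n + i) \<omega>)) \<partial>M)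
     = measure M (AS M \<xi> (Suc n) x0) * W a t (\<lambda>k. c (Suc k)) m
       + exp t * (measure M (AS M \<xi> (Suc n) x1) * W a t (\<lambda>k. c (Suc k) + a (Suc k)) m)"
    unfolding I F_def using Suc.IH[OF x0v] Suc.IH[OF x1v] c0 c1 by simp
  also have "\<dots> = measure M (AS M \<xi> n x) * W a t c (Suc m)"
    unfolding P0 P1 by (simp add: algebra_simps)
  finally show ?case unfolding c_def .
qed

lemma expect_W:
  assumes D: "DTHP M a \<xi>"
  shows "(\<integral>\<omega>. exp (t * DTHP_H \<xi> n \<omega>) \<partial>M) = W a t (\<lambda>_. a 0) n"
proof -
  interpret prob_space M using D unfolding DTHP_def by blast
  have A0: "AS M \<xi> 0 x = space M" for x unfolding AS_def by auto
  have H: "DTHP_H \<xi> n \<omega> = (\<Sum>i<n. \<xi> (Suc 0 + i) \<omega>)" for \<omega>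
    unfolding DTHP_H_def by (induction n) auto
  have "(\<integral>\<omega>. exp (t * DTHP_H \<xi> n \<omega>) \<partial>M)
      = (\<integral>\<omega>. indicator (AS M \<xi> 0 (\<lambda>_. 0)) \<omega> * exp (t * (\<Sum>i<n. \<xi> (Suc 0 + i) \<omega>)) \<partial>M)"
    by (intro Bochner_Integration.integral_cong) (auto simp: A0 H indicator_def)
  also have "\<dots> = W a t (\<lambda>_. a 0) n"
    using key[OF D, of 0 "\<lambda>_. 0" t n] by (simp add: A0 prob_space)
  finally show ?thesis .
qed



theorem theorem4p5:
  fixes M :: "'s measure" and a :: "nat \<Rightarrow> real" and \<xi> :: "nat \<Rightarrow> 's \<Rightarrow> real"
  assumes a_pos: "\<forall>i. a i > 0"
    and a_summable: "summable a"
    and a_sum_lt1: "(\<Sum>i. a i) < 1"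
    and a_moment: "summable (\<lambda>i. real i * a i)"
    and hawkes: "DTHP M a \<xi>"
  shows "\<exists>\<Gamma> :: real \<Rightarrow> real. \<forall>t::real.
           (\<lambda>n. ln (\<integral>\<omega>. exp (t * DTHP_H \<xi> n \<omega>) \<partial>M) / real n) \<longlonglongrightarrow> \<Gamma> t"
proof -
  have a: "\<forall>i. a i \<ge> 0" using a_pos by (simp add: less_imp_le)
  have v0: "valid a (\<lambda>_. a 0)" unfolding valid_def
  proof
    fix k
    have "(\<Sum>j<Suc k. a j) \<le> (\<Sum>i. a i)" using a_summable a by (intro sum_le_suminf) auto
    moreover have "(\<Sum>j<Suc k. a j) = a 0 + (\<Sum>j=1..k. a j)"
      unfolding sum.lessThan_Suc_shift by (simp add: sum.atLeast1_atMost_eq)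
    ultimately show "0 \<le> a 0 \<and> a 0 + (\<Sum>j=1..k. a j) < 1" using a a_sum_lt1 by force
  qed
  have conv: "convergent (\<lambda>n. ln (\<integral>\<omega>. exp (t * DTHP_H \<xi> n \<omega>) \<partial>M) / real n)" for t
  proof -
    define g where "g = W a t (\<lambda>_. a 0)"
    define f where "f = (\<lambda>n. ln (g n))"
    have E: "(\<lambda>n. ln (\<integral>\<omega>. exp (t * DTHP_H \<xi> n \<omega>) \<partial>M) / real n) = (\<lambda>n. f n / real n)"
      unfolding f_def g_def using expect_W[OF hawkes] by simp
    have gb: "exp (- \<bar>t\<bar> * n) \<le> g n \<and> g n \<le> exp (\<bar>t\<bar> * n)" for n
      unfolding g_def by (rule W_bounds[OF a v0])
    have gpos: "0 < g n" for n using gb[of n] by (meson exp_gt_zero order_less_le_trans)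
    have fb: "- \<bar>t\<bar> * n \<le> f n \<and> f n \<le> \<bar>t\<bar> * n" for n
      unfolding f_def using gb[of n] gpos[of n]
      by (metis ln_exp ln_le_cancel_iff exp_gt_zero)
    have fmul: "f (m + n) - (f m + f n) = ln (g (m+n)) - ln (g m * g n)" for m n
      unfolding f_def using gpos[of m] gpos[of n] by (simp add: ln_mult)
    show ?thesis
    proof (cases "0 \<le> t")
      case True
      have "g m * g n \<le> g (m + n)" for m n
        unfolding g_def using W_super[OF a True v0 v0] a by auto
      then have "f m + f n \<le> f (m + n)" for m n
        using fmul[of m n] gpos by (smt (verit) ln_le_cancel_iff mult_pos_pos)
      then show ?thesis unfolding E
        by (rule fekete[where C="\<bar>t\<bar>"]) (use fb in auto)
    next
      case False
      then have t: "t \<le> 0" by simp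
      have "g (m + n) \<le> g m * g n" for m n
        unfolding g_def using W_sub[OF a t v0 v0] a by auto
      then have "(- f m) + (- f n) \<le> - f (m + n)" for m n
        using fmul[of m n] gpos by (smt (verit) ln_le_cancel_iff mult_pos_pos)
      moreover have "- f n \<le> \<bar>t\<bar> * real n" for n using fb[of n] by linarith
      ultimately have "convergent (\<lambda>n. (- f n) / real n)"
        by (rule fekete[where C="\<bar>t\<bar>"])
      then have "convergent (\<lambda>n. - (f n / real n))" by simp
      then show ?thesis unfolding E using convergent_minus_iff by blast
    qed
  qed
  show ?thesis
    by (intro exI[of _ "\<lambda>t. lim (\<lambda>n. ln (\<integral>\<omega>. exp (t * DTHP_H \<xi> n \<omega>) \<partial>M) / real n)"] allI)
       (use conv in \<open>simp add: convergent_LIMSEQ_iff\<close>)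
qed

end
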